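(* Let $(\mathcal A,r)$ be a potential population game with potential $\Phi$, $\mathcal G=(\mathcal H,\boldsymbol\eta,W)$ an undirected connected community network, and $\mathbf f$ an imitation mechanism satisfying Assumption 1. For $\mathbf x\in\mathcal X$ with $\mathbf y=\mathbf x\mathbf 1$, define $\dot y_i=\sum_{h\in\mathcal H}\dot x_{ih}$ using the right-hand side of the network imitation dynamics at $\mathbf x$, and $\dot\Phi(\mathbf y)=\sum_{i\in\mathcal A}\frac{\partial\Phi(\mathbf y)}{\partial y_i}\dot y_i$. Then $\dot\Phi(\mathbf y)\ge 0$ for every $\mathbf x\in\mathcal X$, with equality if and only if $\mathbf x\in\mathcal X^\bullet$.
   Context: Let $\mathcal A$ be a finite set of actions, $\mathcal Y=\{\mathbf y\in\mathbb R_+^{\mathcal A}:\mathbf 1^\top\mathbf y=1\}$, reward functions $r_i:\mathcal Y\to\mathbb R$. The game $(\mathcal A,r)$ is potential if there is a differentiable $\Phi:\mathcal Y\to\mathbb R$ (differentiable on a neighborhood of $\mathcal Y$) with $r_j(\mathbf y)-r_i(\mathbf y)=\frac{\partial\Phi}{\partial y_j}(\mathbf y)-\frac{\partial\Phi}{\partial y_i}(\mathbf y)$ for all $i,j\in\mathcal A$, $\mathbf y\in\mathcal Y$. Community network $\mathcal G=(\mathcal H,\boldsymbol\eta,W)$: finite $\mathcal H$, $\eta_h>0$ with $\sum_h\eta_h=1$, nonnegative $W$ with positive diagonal; connected = $W$ irreducible; undirected = $W=W^\top$. $\mathcal X=\{\mathbf x\in\mathbb R_+^{\mathcal A\times\mathcal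 H}:\mathbf 1^\top\mathbf x=\boldsymbol\eta^\top\}$. Imitation mechanism: Lipschitz $\mathbf f:\mathcal Y\to\mathbb R_+^{\mathcal A\times\mathcal A}$. Dynamics: $$\dot x_{ih}=\sum_{j\in\mathcal A}\sum_{k\in\mathcal H}\big(x_{jh}W_{hk}x_{ik}f_{ji}(\mathbf x\mathbf 1)-x_{ih}W_{hk}x_{jk}f_{ij}(\mathbf x\mathbf 1)\big).$$ Assumption 1: $\operatorname{sgn}(f_{ij}(\mathbf y)-f_{ji}(\mathbf y))=\operatorname{sgn}(r_j(\mathbf y)-r_i(\mathbf y))$ for all $i,j,\mathbf y$. $\mathcal Y^\bullet=\{\mathbf y\in\mathcal Y:y_i>0,y_j>0\Rightarrow r_i(\mathbf y)=r_j(\mathbf y)\}$, $\mathcal X^\bullet=\{\mathbf x\in\mathcal X:\mathbf x\mathbf 1\in\mathcal Y^\bullet\}$. *)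

theory Defs
  imports "HOL-Analysis.Analysis"
begin

definition simplexY :: "(real ^ 'a::finite) set" where
  "simplexY = {y. (\<forall>i. 0 \<le> y $ i) \<and> (\<Sum>i\<in>UNIV. y $ i) = 1}"

definition stateX :: "('h::finite \<Rightarrow> real) \<Rightarrow> ('a::finite \<Rightarrow> 'h \<Rightarrow> real) set" where
  "stateX \<eta> = {x. (\<forall>i h. 0 \<le> x i h) \<and> (\<forall>h. (\<Sum>i\<in>UNIV. x i h) = \<eta> h)}"

definition aggr :: "('a::finite \<Rightarrow> 'h::finite \<Rightarrow> real) \<Rightarrow> real ^ 'a" where
  "aggr x = (\<chi> i. \<Sum>h\<in>UNIV. x i h)"

text \<open>Potential game: Phi differentiable on an open neighbourhood U of Y, with
  (Frechet) derivative DPhi y at y; partial derivative w.r.t. y_j is DPhi y (axis j 1).\<close>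
definition potential_game ::
  "('a::finite \<Rightarrow> real ^ 'a \<Rightarrow> real) \<Rightarrow> (real ^ 'a \<Rightarrow> real) \<Rightarrow> (real ^ 'a \<Rightarrow> real ^ 'a \<Rightarrow> real) \<Rightarrow> bool" where
  "potential_game r \<Phi> D\<Phi> \<longleftrightarrow>
     (\<exists>U. open U \<and> simplexY \<subseteq> U \<and> (\<forall>y\<in>U. (\<Phi> has_derivative D\<Phi> y) (at y))) \<and>
     (\<forall>y\<in>simplexY. \<forall>i j. r j y - r i y = D\<Phi> y (axis j 1) - D\<Phi> y (axis i 1))"

definition community_network :: "('h::finite \<Rightarrow> real) \<Rightarrow> ('h \<Rightarrow> 'h \<Rightarrow> real) \<Rightarrow> bool" where
  "community_network \<eta> W \<longleftrightarrow> (\<forall>h. 0 < \<eta> h) \<and> (\<Sum>h\<in>UNIV. \<eta> h) = 1 \<and>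
     (\<forall>h k. 0 \<le> W h k) \<and> (\<forall>h. 0 < W h h)"

definition irreducible_mat :: "('h \<Rightarrow> 'h \<Rightarrow> real) \<Rightarrow> bool" where
  "irreducible_mat W \<longleftrightarrow> (\<forall>h k. (h, k) \<in> {(a, b). 0 < W a b}\<^sup>*)"

definition undirected :: "('h \<Rightarrow> 'h \<Rightarrow> real) \<Rightarrow> bool" where
  "undirected W \<longleftrightarrow> (\<forall>h k. W h k = W k h)"

definition imitation_mechanism :: "(real ^ 'a::finite \<Rightarrow> 'a \<Rightarrow> 'a \<Rightarrow> real) \<Rightarrow> bool" where
  "imitation_mechanism f \<longleftrightarrow> (\<forall>y\<in>simplexY. \<forall>i j. 0 \<le> f y i j) \<and>
     (\<exists>L. \<forall>y\<in>simplexY. \<forall>y'\<in>simplexY. \<forall>i j. \<bar>f y i j - f y' i j\<bar> \<le> L * dist y y')"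

definition assumption1 :: "('a::finite \<Rightarrow> real ^ 'a \<Rightarrow> real) \<Rightarrow> (real ^ 'a \<Rightarrow> 'a \<Rightarrow> 'a \<Rightarrow> real) \<Rightarrow> bool" where
  "assumption1 r f \<longleftrightarrow> (\<forall>y\<in>simplexY. \<forall>i j. sgn (f y i j - f y j i) = sgn (r j y - r i y))"

definition xdot :: "('h::finite \<Rightarrow> 'h \<Rightarrow> real) \<Rightarrow> (real ^ 'a::finite \<Rightarrow> 'a \<Rightarrow> 'a \<Rightarrow> real)
    \<Rightarrow> ('a \<Rightarrow> 'h \<Rightarrow> real) \<Rightarrow> 'a \<Rightarrow> 'h \<Rightarrow> real" where
  "xdot W f x i h = (\<Sum>j\<in>UNIV. \<Sum>k\<in>UNIV.
      x j h * W h k * x i k * f (aggr x) j i - x i h * W h k * x j k * f (aggr x) i j)"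

definition ydot :: "('h::finite \<Rightarrow> 'h \<Rightarrow> real) \<Rightarrow> (real ^ 'a::finite \<Rightarrow> 'a \<Rightarrow> 'a \<Rightarrow> real)
    \<Rightarrow> ('a \<Rightarrow> 'h \<Rightarrow> real) \<Rightarrow> 'a \<Rightarrow> real" where
  "ydot W f x i = (\<Sum>h\<in>UNIV. xdot W f x i h)"

definition Phidot :: "(real ^ 'a::finite \<Rightarrow> real ^ 'a \<Rightarrow> real) \<Rightarrow> ('h::finite \<Rightarrow> 'h \<Rightarrow> real)
    \<Rightarrow> (real ^ 'a \<Rightarrow> 'a \<Rightarrow> 'a \<Rightarrow> real) \<Rightarrow> ('a \<Rightarrow> 'h \<Rightarrow> real) \<Rightarrow> real" where
  "Phidot D\<Phi> W f x = (\<Sum>i\<in>UNIV. D\<Phi> (aggr x) (axis i 1) * ydot W f x i)"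

definition Ybullet :: "('a::finite \<Rightarrow> real ^ 'a \<Rightarrow> real) \<Rightarrow> (real ^ 'a) set" where
  "Ybullet r = {y\<in>simplexY. \<forall>i j. 0 < y $ i \<and> 0 < y $ j \<longrightarrow> r i y = r j y}"

definition Xbullet :: "('a::finite \<Rightarrow> real ^ 'a \<Rightarrow> real) \<Rightarrow> ('h::finite \<Rightarrow> real) \<Rightarrow> ('a \<Rightarrow> 'h \<Rightarrow> real) set" where
  "Xbullet r \<eta> = {x\<in>stateX \<eta>. aggr x \<in> Ybullet r}"

end

theory Submission imports Defs begin

lemma ydot_eq:
  "ydot W f x i = (\<Sum>j\<in>UNIV. (\<Sum>h\<in>UNIV. \<Sum>k\<in>UNIV. x j h * W h k * x i k) * f (aggr x) j i
       - (\<Sum>h\<in>UNIV. \<Sum>k\<in>UNIV. x i h * W h k * x j k) * f (aggr x) i j)"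
proof -
  have "ydot W f x i = (\<Sum>h\<in>UNIV. \<Sum>j\<in>UNIV. \<Sum>k\<in>UNIV.
      x j h * W h k * x i k * f (aggr x) j i - x i h * W h k * x j k * f (aggr x) i j)"
    unfolding ydot_def xdot_def ..
  also have "\<dots> = (\<Sum>j\<in>UNIV. \<Sum>h\<in>UNIV. \<Sum>k\<in>UNIV.
      x j h * W h k * x i k * f (aggr x) j i - x i h * W h k * x j k * f (aggr x) i j)"
    by (rule sum.swap)
  also have "\<dots> = (\<Sum>j\<in>UNIV. (\<Sum>h\<in>UNIV. \<Sum>k\<in>UNIV. x j h * W h k * x i k * f (aggr x) j i)
       - (\<Sum>h\<in>UNIV. \<Sum>k\<in>UNIV. x i h * W h k * x j k * f (aggr x) i j))"
    by (simp add: sum_subtractf)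
  finally show ?thesis by (simp add: sum_distrib_right)
qed

lemma sgn_prod:
  fixes a b :: real
  assumes "sgn b = sgn a"
  shows "0 \<le> a * b" "a * b = 0 \<longleftrightarrow> a = 0"
  using assms by (auto simp: sgn_if zero_le_mult_iff split: if_splits)

lemma M_pos:
  fixes x :: "'a \<Rightarrow> 'h::finite \<Rightarrow> real"
  assumes nn: "\<forall>i h. 0 \<le> x i h" and W: "\<forall>h k. 0 \<le> W h k"
    and "0 < x i h" "0 < x j k" "0 < W h k"
  shows "0 < (\<Sum>h\<in>UNIV. \<Sum>k\<in>UNIV. x i h * W h k * x j k)"
proof -
  have "0 < x i h * W h k * x j k" using assms by simp
  also have "\<dots> \<le> (\<Sum>k\<in>UNIV. x i h * W h k * x j k)"
    by (rule member_le_sum) (auto simp: nn W)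
  also have "\<dots> \<le> (\<Sum>h\<in>UNIV. \<Sum>k\<in>UNIV. x i h * W h k * x j k)"
    by (rule member_le_sum) (auto intro!: sum_nonneg simp: nn W)
  finally show ?thesis .
qed

theorem lemma2:
  fixes r :: "'a::finite \<Rightarrow> real ^ 'a \<Rightarrow> real"
    and \<Phi> :: "real ^ 'a \<Rightarrow> real"
    and D\<Phi> :: "real ^ 'a \<Rightarrow> real ^ 'a \<Rightarrow> real"
    and \<eta> :: "'h::finite \<Rightarrow> real"
    and W :: "'h \<Rightarrow> 'h \<Rightarrow> real"
    and f :: "real ^ 'a \<Rightarrow> 'a \<Rightarrow> 'a \<Rightarrow> real"
  assumes "potential_game r \<Phi> D\<Phi>"
    and "community_network \<eta> W"
    and "undirected W"
    and "irreducible_mat W"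
    and "imitation_mechanism f"
    and "assumption1 r f"
  shows "\<forall>x\<in>stateX \<eta>. 0 \<le> Phidot D\<Phi> W f x \<and> (Phidot D\<Phi> W f x = 0 \<longleftrightarrow> x \<in> Xbullet r \<eta>)"
proof
  fix x :: "'a \<Rightarrow> 'h \<Rightarrow> real" assume x: "x \<in> stateX \<eta>"
  have nn: "\<forall>i h. 0 \<le> x i h" and cs: "\<And>h. (\<Sum>i\<in>UNIV. x i h) = \<eta> h"
    using x by (auto simp: stateX_def)
  have Wnn: "\<forall>h k. 0 \<le> W h k" and Wd: "\<And>h. 0 < W h h" and etap: "\<And>h. 0 < \<eta> h"
    and etas: "(\<Sum>h\<in>UNIV. \<eta> h) = 1"
    using assms(2) by (auto simp: community_network_def)
  have Wsym: "\<And>h k. W h k = W k h" using assms(3) by (auto simp: undirected_def)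
  define y where "y = aggr x"
  have yi: "\<And>i. y $ i = (\<Sum>h\<in>UNIV. x i h)" by (simp add: y_def aggr_def)
  have yS: "y \<in> simplexY"
  proof -
    have "(\<Sum>i\<in>UNIV. y $ i) = (\<Sum>h\<in>UNIV. \<Sum>i\<in>UNIV. x i h)"
      unfolding yi by (rule sum.swap)
    also have "\<dots> = 1" by (simp add: cs etas)
    finally show ?thesis using nn by (auto simp: simplexY_def yi intro!: sum_nonneg)
  qed
  define M where "M i j = (\<Sum>h\<in>UNIV. \<Sum>k\<in>UNIV. x i h * W h k * x j k)" for i j
  have Msym: "M j i = M i j" for i j
  proof -
    have "M j i = (\<Sum>k\<in>UNIV. \<Sum>h\<in>UNIV. x j h * W h k * x i k)"
      unfolding M_def by (rule sum.swap)
    also have "\<dots> = M i j" unfolding M_def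
      by (rule sum.cong[OF refl], rule sum.cong[OF refl]) (simp add: Wsym mult_ac)
    finally show ?thesis .
  qed
  have Mnn: "0 \<le> M i j" for i j unfolding M_def using nn Wnn by (auto intro!: sum_nonneg)
  define g where "g i = D\<Phi> y (axis i 1)" for i
  define F where "F i j = f y i j" for i j
  define R where "R i = r i y" for i
  have gR: "g i - g j = R i - R j" for i j
    using assms(1) yS unfolding potential_game_def g_def R_def by fastforce
  have sg: "sgn (F j i - F i j) = sgn (R i - R j)" for i j
    using assms(6) yS unfolding assumption1_def F_def R_def by blast
  have yd: "ydot W f x i = (\<Sum>j\<in>UNIV. M i j * (F j i - F i j))" for i
    unfolding ydot_eq F_def y_def
    by (rule sum.cong[OF refl]) (simp add: M_def[symmetric] Msym right_diff_distrib)
  define T where "T i j = g i * (M i j * (F j i - F i j))" for i j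
  define P where "P i j = (R i - R j) * (F j i - F i j) * M i j" for i j
  have Pd: "Phidot D\<Phi> W f x = (\<Sum>i\<in>UNIV. \<Sum>j\<in>UNIV. T i j)"
    unfolding Phidot_def yd T_def g_def y_def[symmetric] by (simp add: sum_distrib_left)
  have "(\<Sum>i\<in>UNIV. \<Sum>j\<in>UNIV. T i j) = (\<Sum>i\<in>UNIV. \<Sum>j\<in>UNIV. T j i)"
    by (rule sum.swap)
  hence "2 * Phidot D\<Phi> W f x = (\<Sum>i\<in>UNIV. \<Sum>j\<in>UNIV. T i j + T j i)"
    unfolding Pd by (simp add: sum.distrib)
  also have "\<dots> = (\<Sum>i\<in>UNIV. \<Sum>j\<in>UNIV. P i j)"
  proof (rule sum.cong[OF refl], rule sum.cong[OF refl])
    fix i j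
    have "T i j + T j i = (g i - g j) * (F j i - F i j) * M i j"
      unfolding T_def by (simp add: Msym[of j i] algebra_simps)
    thus "T i j + T j i = P i j" unfolding P_def gR .
  qed
  finally have PhiP: "2 * Phidot D\<Phi> W f x = (\<Sum>i\<in>UNIV. \<Sum>j\<in>UNIV. P i j)" .
  have Pnn: "0 \<le> P i j" for i j
    unfolding P_def using sgn_prod(1)[OF sg[of j i]] Mnn by simp
  have P0: "P i j = 0 \<longleftrightarrow> (M i j = 0 \<or> R i = R j)" for i j
    unfolding P_def using sgn_prod(2)[OF sg[of j i]] by auto
  have Snn: "0 \<le> (\<Sum>i\<in>UNIV. \<Sum>j\<in>UNIV. P i j)" using Pnn by (auto intro!: sum_nonneg)
  have "Phidot D\<Phi> W f x = 0 \<longleftrightarrow> (\<Sum>i\<in>UNIV. \<Sum>j\<in>UNIV. P i j) = 0" using PhiP by auto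
  also have "\<dots> \<longleftrightarrow> (\<forall>i j. P i j = 0)"
    using Pnn by (simp add: sum_nonneg_eq_0_iff sum_nonneg)
  also have "\<dots> \<longleftrightarrow> (\<forall>i j. M i j = 0 \<or> R i = R j)" using P0 by simp
  also have "\<dots> \<longleftrightarrow> x \<in> Xbullet r \<eta>"
  proof
    assume H: "\<forall>i j. M i j = 0 \<or> R i = R j"
    have pres: "(h, k) \<in> {(a, b). 0 < W a b}\<^sup>* \<Longrightarrow> 0 < x i h \<Longrightarrow> 0 < x j k \<Longrightarrow> R i = R j" for h k i j
    proof (induction k arbitrary: j rule: rtrancl_induct)
      case base
      have "0 < M i j" unfolding M_def by (rule M_pos[OF nn Wnn base(1,2) Wd])
      thus ?case using H by force
    next
      case (step m k)
      obtain l where l: "0 < x l m"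
      proof (rule ccontr)
        assume "\<not> thesis"
        with that have "\<forall>l. x l m \<le> 0" by (meson not_le)
        hence "(\<Sum>l\<in>UNIV. x l m) \<le> 0" by (simp add: sum_nonpos)
        with cs[of m] etap[of m] show False by simp
      qed
      have "R i = R l" using step.IH[OF step.prems(1) l] .
      moreover have "0 < M l j" unfolding M_def
        using M_pos[OF nn Wnn l step.prems(2)] step.hyps(2) by simp
      ultimately show ?case using H by force
    qed
    show "x \<in> Xbullet r \<eta>"
      unfolding Xbullet_def Ybullet_def
    proof (simp add: x y_def[symmetric] yS, intro allI impI, elim conjE)
      fix i j assume "0 < y $ i" "0 < y $ j"
      then obtain h k where "0 < x i h" "0 < x j k"
        unfolding yi by (metis not_le sum_nonpos)
      moreover have "(h, k) \<in> {(a, b). 0 < W a b}\<^sup>*"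
        using assms(4) unfolding irreducible_mat_def by blast
      ultimately show "r i y = r j y" using pres unfolding R_def by blast
    qed
  next
    assume "x \<in> Xbullet r \<eta>"
    hence Yb: "\<And>i j. 0 < y $ i \<Longrightarrow> 0 < y $ j \<Longrightarrow> r i y = r j y"
      unfolding Xbullet_def Ybullet_def y_def by blast
    have z: "x i h = 0" if "\<not> 0 < y $ i" for i h
    proof -
      have "0 \<le> y $ i" using yS by (simp add: simplexY_def)
      hence "(\<Sum>h\<in>UNIV. x i h) = 0" using that yi[of i] by simp
      thus ?thesis using nn by (simp add: sum_nonneg_eq_0_iff)
    qed
    show "\<forall>i j. M i j = 0 \<or> R i = R j"
    proof (intro allI)
      fix i j
      show "M i j = 0 \<or> R i = R j"
      proof (cases "0 < y $ i \<and> 0 < y $ j")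
        case True thus ?thesis using Yb unfolding R_def by blast
      next
        case False thus ?thesis unfolding M_def using z by auto
      qed
    qed
  qed
  finally show "0 \<le> Phidot D\<Phi> W f x \<and> (Phidot D\<Phi> W f x = 0 \<longleftrightarrow> x \<in> Xbullet r \<eta>)"
    using PhiP Snn by linarith
qed

end
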